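(* Let $k\ge 1$, $n\ge 2$, $\mathbf C=(c_0,\dots,c_k)\in\{0,1\}^{k+1}$, and $\gamma$ Euler's constant. Put $\lambda=c_0(n-1)+c_1k(\log(n-1)+\gamma)+\frac{\pi^2}{6}\sum_{\beta=2}^kc_\beta\binom{k}{\beta}$ and $\lambda'=c'_0(n-1)+c'_1k(\log(n-1)+\gamma)+\frac{\pi^2}{6}\sum_{\beta=2}^kc'_\beta\binom{k}{\beta}$. Then: (i) for $0\le m\le n$, $O_{\mathbf C}(n,m)\le O_{\mathbf C'\max}(n,n-m)$; (ii) $\dfrac{\sum_{m=0}^nO_{\mathbf C\max}(n,m)}{\sum_{m=0}^nO_{\mathbf C}(n,m)}\le\exp(\lambda)$; (iii) $\dfrac{\sum_{m=0}^nO_{\mathbf C'\max}(n,m)}{\sum_{m=0}^nO_{\mathbf C}(n,m)}\le\exp(\lambda')$; (iv) for $k=1$, $\mathbf C=(0,1)$, with $s_u(n,m)$ the unsigned Stirling numbers of the first kind and $s_{u\max}(n,m)=\frac{(n-1)!}{(m-1)!}\left(\sum_{i=1}^{n-1}\frac1i\right)^{m-1}$ for $1\le m\le n$ (and $0$ for $m=0$), $$\frac{\sum_{m=0}^ns_{u\max}(n,m)}{\sum_{m=0}^ns_u(n,m)}\le\frac{n-1}{n}\exp\Big(\sum_{j=2}^n\frac1{j-1}-\log(n-1)\Big)\le\exp(\gamma)\le 1.7811.$$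
   Context: Fix integers $k\ge 1$, $n\ge 2$ and $\mathbf C=(c_0,\dots,c_k)\in\{0,1\}^{k+1}$; put $\mathbf C'=(1,\dots,1)-\mathbf C=(c'_0,\dots,c'_k)$. Consider $k$-tuples $(\pi_1,\dots,\pi_k)$ of permutations of $\{1,\dots,n\}$. A position $\alpha$ is a record of a permutation $\pi$ if $\pi(\alpha)<\pi(\alpha')$ for every $\alpha'<\alpha$ (position $1$ is always a record). For a tuple, let $l_\alpha$ be the number of $\beta\in\{1,\dots,k\}$ for which $\alpha$ is a record of $\pi_\beta$. The $\mathbf C$ sequential optimization set is $S=\{\alpha:c_{l_\alpha}=1\}$, with weight $|S|$; $O_{\mathbf C}(n,m)$ is the number of $k$-tuples of weight $m$ (for integer $m$), and $O_{\mathbf C'}$ is the same with $\mathbf C'$. For $j\ge2$ and $X\in\mathbb R^{k+1}$, $F_j(X)=\sum_{\beta=0}^k\binom{k}{\beta}\frac{x_\beta}{(j-1)^\beta}$. Let $\mathbf H_n\mathbf X^T=\sum_{\beta=0}^k x_\beta\binom{k}{\beta}\sum_{j=1}^{n-1}j^{-\beta}$. For $1\le m\le n$, $O_{\mathbf C\max}(n,m+c_k-1)=\frac{(n-1)!^k}{(m-1)!}(\mathbf H_n\mathbf C^T)^{m-1}\prod_{i=1}^{n-m}F_{i+1}(\mathbf C')$ and $O_{\mathbf C'\max}(n,m+c'_k-1)=\frac{(n-1)!^k}{(m-1)!}(\mathbf H_n\mathbf C'^T)^{m-1}\prod_{i=1}^{n-m}F_{i+1}(\mathbf C)$; at integer arguments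 outside these ranges $O_{\mathbf C\max}$ and $O_{\mathbf C'\max}$ are taken to be $0$. Empty products equal $1$; $\log$ is the natural logarithm. *)

theory Defs
  imports "HOL-Analysis.Analysis" "HOL-Combinatorics.Permutations" "HOL-Combinatorics.Stirling"
begin

definition is_record :: "(nat \<Rightarrow> nat) \<Rightarrow> nat \<Rightarrow> bool" where
  "is_record \<pi> \<alpha> \<longleftrightarrow> (\<forall>\<alpha>'\<in>{1..<\<alpha>}. \<pi> \<alpha> < \<pi> \<alpha>')"

definition perm_tuples :: "nat \<Rightarrow> nat \<Rightarrow> (nat \<Rightarrow> nat) list set" where
  "perm_tuples k n = {ps. length ps = k \<and> (\<forall>\<pi>\<in>set ps. \<pi> permutes {1..n})}"

definition rec_count :: "(nat \<Rightarrow> nat) list \<Rightarrow> nat \<Rightarrow> nat" where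
  "rec_count ps \<alpha> = length (filter (\<lambda>\<pi>. is_record \<pi> \<alpha>) ps)"

definition opt_set :: "(nat \<Rightarrow> nat) \<Rightarrow> nat \<Rightarrow> (nat \<Rightarrow> nat) list \<Rightarrow> nat set" where
  "opt_set c n ps = {\<alpha>\<in>{1..n}. c (rec_count ps \<alpha>) = 1}"

definition O_C :: "(nat \<Rightarrow> nat) \<Rightarrow> nat \<Rightarrow> nat \<Rightarrow> nat \<Rightarrow> nat" where
  "O_C c k n m = card {ps \<in> perm_tuples k n. card (opt_set c n ps) = m}"

definition compl_vec :: "(nat \<Rightarrow> nat) \<Rightarrow> nat \<Rightarrow> nat" where
  "compl_vec c = (\<lambda>\<beta>. 1 - c \<beta>)"

definition H_vec :: "(nat \<Rightarrow> nat) \<Rightarrow> nat \<Rightarrow> nat \<Rightarrow> real" where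
  "H_vec c k n = (\<Sum>\<beta>=0..k. real (c \<beta>) * real (k choose \<beta>) * (\<Sum>j=1..n-1. 1 / real j ^ \<beta>))"

definition F_vec :: "(nat \<Rightarrow> nat) \<Rightarrow> nat \<Rightarrow> nat \<Rightarrow> real" where
  "F_vec c k j = (\<Sum>\<beta>=0..k. real (k choose \<beta>) * real (c \<beta>) / (real j - 1) ^ \<beta>)"

text \<open>O_{C max}(n, j) for integer j: given by the formula at j = m + c_k - 1 with 1 <= m <= n,
  and 0 otherwise. Its companion O_{C' max} is Omax (compl_vec c), whose product uses
  F(C'') = F(C) since C has 0/1 entries.\<close>
definition Omax :: "(nat \<Rightarrow> nat) \<Rightarrow> nat \<Rightarrow> nat \<Rightarrow> int \<Rightarrow> real" where
  "Omax c k n j =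
     (if 1 \<le> j + 1 - int (c k) \<and> j + 1 - int (c k) \<le> int n then
        (let m = nat (j + 1 - int (c k)) in
           fact (n - 1) ^ k / fact (m - 1) * H_vec c k n ^ (m - 1)
           * (\<Prod>i=1..n-m. F_vec (compl_vec c) k (i + 1)))
      else 0)"

definition su_max :: "nat \<Rightarrow> nat \<Rightarrow> real" where
  "su_max n m = (if 1 \<le> m \<and> m \<le> n then
       fact (n - 1) / fact (m - 1) * (\<Sum>i=1..n-1. 1 / real i) ^ (m - 1) else 0)"

end

theory Submission
  imports Defs
begin


definition shiftv :: "nat \<Rightarrow> nat \<Rightarrow> nat" where
  "shiftv v x = (if x < v then x else x - 1)"

lemma shiftv_inj: "x \<noteq> v \<Longrightarrow> y \<noteq> v \<Longrightarrow> shiftv v x = shiftv v y \<Longrightarrow> x = y"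
  by (auto simp: shiftv_def split: if_splits)

lemma shiftv_less: "x \<noteq> v \<Longrightarrow> y \<noteq> v \<Longrightarrow> shiftv v x < shiftv v y \<longleftrightarrow> x < y"
  by (auto simp: shiftv_def split: if_splits)

definition stdp :: "nat \<Rightarrow> (nat \<Rightarrow> nat) \<Rightarrow> nat \<Rightarrow> nat" where
  "stdp n p = (\<lambda>a. if a \<in> {1..n} then shiftv (p (Suc n)) (p a) else a)"

lemma perm_facts:
  assumes "p permutes {1..Suc n}"
  shows "\<And>a. a \<in> {1..Suc n} \<Longrightarrow> p a \<in> {1..Suc n}"
    and "\<And>a. a \<in> {1..n} \<Longrightarrow> p a \<noteq> p (Suc n)"
    and "\<And>a b. p a = p b \<Longrightarrow> a = b"
proof -
  show "\<And>a. a \<in> {1..Suc n} \<Longrightarrow> p a \<in> {1..Suc n}" using permutes_in_image[OF assms] by blast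
  show inj: "\<And>a b. p a = p b \<Longrightarrow> a = b" using permutes_inj[OF assms] by (auto simp: inj_def)
  show "\<And>a. a \<in> {1..n} \<Longrightarrow> p a \<noteq> p (Suc n)"
  proof
    fix a assume "a \<in> {1..n}" "p a = p (Suc n)"
    then show False using inj[of a "Suc n"] by auto
  qed
qed

lemma stdp_permutes:
  assumes p: "p permutes {1..Suc n}"
  shows "stdp n p permutes {1..n}"
proof (rule bij_imp_permutes)
  note pf = perm_facts[OF p]
  have inj: "inj_on (stdp n p) {1..n}"
  proof (rule inj_onI)
    fix a b assume a: "a \<in> {1..n}" and b: "b \<in> {1..n}" and e: "stdp n p a = stdp n p b"
    then have "shiftv (p (Suc n)) (p a) = shiftv (p (Suc n)) (p b)" by (simp add: stdp_def)
    then have "p a = p b" using shiftv_inj pf(2) a b by blast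
    then show "a = b" using pf(3) by blast
  qed
  have sub: "stdp n p ` {1..n} \<subseteq> {1..n}"
  proof
    fix y assume "y \<in> stdp n p ` {1..n}"
    then obtain a where a: "a \<in> {1..n}" and y: "y = stdp n p a" by blast
    have "p a \<in> {1..Suc n}" using pf(1) a by auto
    moreover have "p (Suc n) \<in> {1..Suc n}" using pf(1) by auto
    moreover have "p a \<noteq> p (Suc n)" using pf(2) a by blast
    ultimately show "y \<in> {1..n}" using a y by (auto simp: stdp_def shiftv_def)
  qed
  show "bij_betw (stdp n p) {1..n} {1..n}"
    using inj endo_inj_surj[OF _ sub inj] by (simp add: bij_betw_def)
  show "\<And>x. x \<notin> {1..n} \<Longrightarrow> stdp n p x = x" unfolding stdp_def by auto
qed

lemma stdp_record:
  assumes p: "p permutes {1..Suc n}" and a: "a \<in> {1..n}"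
  shows "is_record (stdp n p) a \<longleftrightarrow> is_record p a"
proof -
  note pf = perm_facts[OF p]
  have "\<And>b. b \<in> {1..<a} \<Longrightarrow> (stdp n p a < stdp n p b \<longleftrightarrow> p a < p b)"
  proof -
    fix b assume b: "b \<in> {1..<a}"
    then have bn: "b \<in> {1..n}" using a by auto
    show "(stdp n p a < stdp n p b \<longleftrightarrow> p a < p b)"
      using shiftv_less[OF pf(2)[OF a] pf(2)[OF bn]] a bn by (simp add: stdp_def)
  qed
  then show ?thesis unfolding is_record_def by auto
qed

lemma last_record:
  assumes p: "p permutes {1..Suc n}"
  shows "is_record p (Suc n) \<longleftrightarrow> p (Suc n) = 1"
proof -
  note pf = perm_facts[OF p]
  show ?thesis
  proof
    assume r: "is_record p (Suc n)"
    have "1 \<in> {1..Suc n}" by simp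
    then obtain b where b: "b \<in> {1..Suc n}" "p b = 1"
      using permutes_image[OF p] by (metis imageE)
    show "p (Suc n) = 1"
    proof (cases "b = Suc n")
      case True then show ?thesis using b by simp
    next
      case False
      then have "b \<in> {1..<Suc n}" using b by auto
      then have "p (Suc n) < p b" using r by (simp add: is_record_def)
      then show ?thesis using b pf(1)[of "Suc n"] by simp
    qed
  next
    assume e: "p (Suc n) = 1"
    show "is_record p (Suc n)" unfolding is_record_def
    proof
      fix b assume b: "b \<in> {1..<Suc n}"
      then have "p b \<in> {1..Suc n}" "p b \<noteq> p (Suc n)" using pf(1,2) by auto
      then show "p (Suc n) < p b" using e by auto
    qed
  qed
qed

lemma stdp_inj:
  assumes p: "p permutes {1..Suc n}" and q: "q permutes {1..Suc n}"
    and e1: "stdp n p = stdp n q" and e2: "p (Suc n) = q (Suc n)"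
  shows "p = q"
proof
  fix a
  show "p a = q a"
  proof (cases "a \<in> {1..n}")
    case True
    have "stdp n p a = stdp n q a" using e1 by simp
    then have "shiftv (p (Suc n)) (p a) = shiftv (p (Suc n)) (q a)" using True e2 by (simp add: stdp_def)
    then show ?thesis using shiftv_inj perm_facts(2)[OF p True] perm_facts(2)[OF q True] e2 by metis
  next
    case False
    show ?thesis
    proof (cases "a = Suc n")
      case True then show ?thesis using e2 by simp
    next
      case F2: False
      then have "a \<notin> {1..Suc n}" using False by auto
      then show ?thesis using permutes_not_in[OF p] permutes_not_in[OF q] by simp
    qed
  qed
qed

definition Vset :: "nat \<Rightarrow> nat \<Rightarrow> nat list set" where
  "Vset k n = {xs. set xs \<subseteq> {1..Suc n} \<and> length xs = k}"

lemma perm_tuples_alt: "perm_tuples k n = {xs. set xs \<subseteq> {p. p permutes {1..n}} \<and> length xs = k}"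
  by (auto simp: perm_tuples_def)

lemma finite_perm_tuples: "finite (perm_tuples k n)"
  unfolding perm_tuples_alt by (intro finite_lists_length_eq finite_permutations) simp

lemma card_perm_tuples: "card (perm_tuples k n) = fact n ^ k"
  unfolding perm_tuples_alt
  by (subst card_lists_length_eq) (auto intro: finite_permutations simp: card_permutations)

lemma finite_Vset: "finite (Vset k n)"
  unfolding Vset_def by (intro finite_lists_length_eq) simp

lemma card_Vset: "card (Vset k n) = (Suc n) ^ k"
  unfolding Vset_def by (subst card_lists_length_eq) auto

definition Lam :: "nat \<Rightarrow> (nat \<Rightarrow> nat) list \<Rightarrow> (nat \<Rightarrow> nat) list \<times> nat list" where
  "Lam n ps = (map (stdp n) ps, map (\<lambda>p. p (Suc n)) ps)"

lemma Lam_inj: "inj_on (Lam n) (perm_tuples k (Suc n))"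
proof (rule inj_onI)
  fix ps qs assume ps: "ps \<in> perm_tuples k (Suc n)" and qs: "qs \<in> perm_tuples k (Suc n)"
    and e: "Lam n ps = Lam n qs"
  have l: "length ps = length qs" using ps qs by (simp add: perm_tuples_def)
  show "ps = qs"
  proof (rule nth_equalityI[OF l])
    fix i assume i: "i < length ps"
    have pi: "ps ! i permutes {1..Suc n}" using ps i by (auto simp: perm_tuples_def)
    have qi: "qs ! i permutes {1..Suc n}" using qs i l by (auto simp: perm_tuples_def)
    have "map (stdp n) ps ! i = map (stdp n) qs ! i" using e by (simp add: Lam_def)
    then have e1: "stdp n (ps ! i) = stdp n (qs ! i)" using i l by simp
    have "map (\<lambda>p. p (Suc n)) ps ! i = map (\<lambda>p. p (Suc n)) qs ! i" using e by (simp add: Lam_def)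
    then have e2: "(ps ! i) (Suc n) = (qs ! i) (Suc n)" using i l by simp
    show "ps ! i = qs ! i" using stdp_inj[OF pi qi e1 e2] .
  qed
qed

lemma Lam_image_sub: "Lam n ` perm_tuples k (Suc n) \<subseteq> perm_tuples k n \<times> Vset k n"
proof
  fix y assume "y \<in> Lam n ` perm_tuples k (Suc n)"
  then obtain ps where ps: "ps \<in> perm_tuples k (Suc n)" and y: "y = Lam n ps" by blast
  have "\<forall>p\<in>set ps. p permutes {1..Suc n}" using ps by (simp add: perm_tuples_def)
  then have "\<forall>p\<in>set ps. stdp n p permutes {1..n}" "\<forall>p\<in>set ps. p (Suc n) \<in> {1..Suc n}"
    using stdp_permutes perm_facts(1) by auto
  then show "y \<in> perm_tuples k n \<times> Vset k n"
    using ps y by (auto simp: perm_tuples_def Vset_def Lam_def)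
qed

lemma Lam_bij: "bij_betw (Lam n) (perm_tuples k (Suc n)) (perm_tuples k n \<times> Vset k n)"
proof -
  have "card (Lam n ` perm_tuples k (Suc n)) = card (perm_tuples k (Suc n))"
    using card_image[OF Lam_inj] .
  also have "\<dots> = card (perm_tuples k n \<times> Vset k n)"
    by (simp add: card_cartesian_product card_perm_tuples card_Vset power_mult_distrib[symmetric] mult.commute)
  finally have "Lam n ` perm_tuples k (Suc n) = perm_tuples k n \<times> Vset k n"
    by (intro card_subset_eq Lam_image_sub finite_cartesian_product finite_perm_tuples finite_Vset)
  then show ?thesis using Lam_inj by (simp add: bij_betw_def)
qed

definition cnt1 :: "nat list \<Rightarrow> nat" where
  "cnt1 vs = length (filter (\<lambda>v. v = 1) vs)"

lemma rec_count_Suc_low: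
  assumes ps: "ps \<in> perm_tuples k (Suc n)" and a: "a \<in> {1..n}"
  shows "rec_count ps a = rec_count (map (stdp n) ps) a"
proof -
  have "\<forall>p\<in>set ps. p permutes {1..Suc n}" using ps by (simp add: perm_tuples_def)
  then have "filter (\<lambda>p. is_record p a) ps = filter ((\<lambda>p. is_record p a) \<circ> stdp n) ps"
    using stdp_record a by (intro filter_cong) auto
  then show ?thesis by (simp add: rec_count_def filter_map)
qed

lemma rec_count_Suc_top:
  assumes ps: "ps \<in> perm_tuples k (Suc n)"
  shows "rec_count ps (Suc n) = cnt1 (map (\<lambda>p. p (Suc n)) ps)"
proof -
  have "\<forall>p\<in>set ps. p permutes {1..Suc n}" using ps by (simp add: perm_tuples_def)
  then have "filter (\<lambda>p. is_record p (Suc n)) ps = filter ((\<lambda>v. v = 1) \<circ> (\<lambda>p. p (Suc n))) ps"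
    using last_record by (intro filter_cong) auto
  then show ?thesis by (simp add: rec_count_def cnt1_def filter_map)
qed

lemma opt_set_Suc:
  assumes ps: "ps \<in> perm_tuples k (Suc n)"
  shows "opt_set D (Suc n) ps = opt_set D n (fst (Lam n ps))
           \<union> (if D (cnt1 (snd (Lam n ps))) = 1 then {Suc n} else {})"
proof -
  have "opt_set D (Suc n) ps = {a\<in>{1..n}. D (rec_count ps a) = 1} \<union> {a\<in>{Suc n}. D (rec_count ps a) = 1}"
    unfolding opt_set_def by auto
  also have "{a\<in>{1..n}. D (rec_count ps a) = 1} = opt_set D n (fst (Lam n ps))"
    unfolding opt_set_def Lam_def using rec_count_Suc_low[OF ps] by auto
  also have "{a\<in>{Suc n}. D (rec_count ps a) = 1} = (if D (cnt1 (snd (Lam n ps))) = 1 then {Suc n} else {})"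
    using rec_count_Suc_top[OF ps] by (auto simp: Lam_def)
  finally show ?thesis .
qed

lemma card_opt_set_Suc:
  assumes ps: "ps \<in> perm_tuples k (Suc n)"
  shows "card (opt_set D (Suc n) ps) = card (opt_set D n (fst (Lam n ps)))
           + (if D (cnt1 (snd (Lam n ps))) = 1 then 1 else 0)"
proof -
  have fin: "finite (opt_set D n (fst (Lam n ps)))" and nin: "Suc n \<notin> opt_set D n (fst (Lam n ps))"
    by (auto simp: opt_set_def)
  show ?thesis using fin nin by (simp add: opt_set_Suc[OF ps])
qed

lemma card_prod_split:
  assumes "finite A" "finite B"
  shows "card {y \<in> A \<times> B. P (fst y) (snd y)} = (\<Sum>b\<in>B. card {a\<in>A. P a b})"
proof -
  have "card {y \<in> A \<times> B. P (fst y) (snd y)} = (\<Sum>y\<in>A \<times> B. if P (fst y) (snd y) then 1 else 0)"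
    using assms by (simp add: sum.inter_filter[symmetric])
  also have "\<dots> = (\<Sum>a\<in>A. \<Sum>b\<in>B. if P a b then 1 else 0)"
    by (simp add: sum.cartesian_product split_def)
  also have "\<dots> = (\<Sum>b\<in>B. \<Sum>a\<in>A. if P a b then 1 else 0)"
    by (rule sum.swap)
  also have "\<dots> = (\<Sum>b\<in>B. card {a\<in>A. P a b})"
    using assms by (simp add: sum.inter_filter[symmetric])
  finally show ?thesis .
qed

lemma image_filter_eq: "f ` {x\<in>A. P (f x)} = {y \<in> f ` A. P y}"
  by auto

lemma O_C_Suc_eq:
  "O_C D k (Suc n) w = (\<Sum>vs\<in>Vset k n. card {qs\<in>perm_tuples k n.
      card (opt_set D n qs) + (if D (cnt1 vs) = 1 then 1 else 0) = w})"
proof -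
  define g where "g y = card (opt_set D n (fst y)) + (if D (cnt1 (snd y)) = 1 then 1 else 0)" for y
  have "O_C D k (Suc n) w = card {ps\<in>perm_tuples k (Suc n). g (Lam n ps) = w}"
  proof -
    have "{ps\<in>perm_tuples k (Suc n). card (opt_set D (Suc n) ps) = w} = {ps\<in>perm_tuples k (Suc n). g (Lam n ps) = w}"
      using card_opt_set_Suc[of _ k n D] by (auto simp: g_def)
    then show ?thesis by (simp add: O_C_def)
  qed
  also have "\<dots> = card (Lam n ` {ps\<in>perm_tuples k (Suc n). g (Lam n ps) = w})"
    by (rule card_image[symmetric], rule inj_on_subset[OF Lam_inj]) auto
  also have "Lam n ` {ps\<in>perm_tuples k (Suc n). g (Lam n ps) = w} = {y \<in> perm_tuples k n \<times> Vset k n. g y = w}"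
  proof -
    have "Lam n ` {ps\<in>perm_tuples k (Suc n). g (Lam n ps) = w} = {y \<in> Lam n ` perm_tuples k (Suc n). g y = w}"
      by auto
    also have "Lam n ` perm_tuples k (Suc n) = perm_tuples k n \<times> Vset k n"
      by (rule bij_betw_imp_surj_on[OF Lam_bij])
    finally show ?thesis .
  qed
  also have "card \<dots> = (\<Sum>vs\<in>Vset k n. card {qs\<in>perm_tuples k n.
      card (opt_set D n qs) + (if D (cnt1 vs) = 1 then 1 else 0) = w})"
    unfolding g_def by (rule card_prod_split[OF finite_perm_tuples finite_Vset])
  finally show ?thesis .
qed

lemma sum_if_const:
  assumes "finite V"
  shows "(\<Sum>v\<in>V. if P v then (X::nat) else Y) = card {v\<in>V. P v} * X + card {v\<in>V. \<not> P v} * Y"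
proof -
  have "(\<Sum>v\<in>V. if P v then X else Y) = (\<Sum>v\<in>{v\<in>V. P v}. X) + (\<Sum>v\<in>{v\<in>V. \<not> P v}. Y)"
    using assms by (simp add: sum.If_cases Int_def)
  then show ?thesis by simp
qed

lemma O_C_Suc_nat:
  "O_C D k (Suc n) w = card {vs\<in>Vset k n. D (cnt1 vs) = 1} * (if w \<ge> 1 then O_C D k n (w - 1) else 0)
      + card {vs\<in>Vset k n. D (cnt1 vs) \<noteq> 1} * O_C D k n w"
proof -
  have "O_C D k (Suc n) w = (\<Sum>vs\<in>Vset k n. if D (cnt1 vs) = 1 then (if w \<ge> 1 then O_C D k n (w - 1) else 0)
      else O_C D k n w)"
    unfolding O_C_Suc_eq
  proof (rule sum.cong[OF refl])
    fix vs
    show "card {qs\<in>perm_tuples k n. card (opt_set D n qs) + (if D (cnt1 vs) = 1 then 1 else 0) = w}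
      = (if D (cnt1 vs) = 1 then (if w \<ge> 1 then O_C D k n (w - 1) else 0) else O_C D k n w)"
    proof (cases "D (cnt1 vs) = 1")
      case True
      show ?thesis
      proof (cases "w \<ge> 1")
        case True
        have "{qs\<in>perm_tuples k n. card (opt_set D n qs) + (if D (cnt1 vs) = 1 then 1 else 0) = w}
           = {qs\<in>perm_tuples k n. card (opt_set D n qs) = w - 1}" using True \<open>D (cnt1 vs) = 1\<close> by auto
        then show ?thesis using True \<open>D (cnt1 vs) = 1\<close> by (simp add: O_C_def)
      next
        case False
        have "{qs\<in>perm_tuples k n. card (opt_set D n qs) + (if D (cnt1 vs) = 1 then 1 else 0) = w} = {}"
          using False \<open>D (cnt1 vs) = 1\<close> by auto
        then show ?thesis using False \<open>D (cnt1 vs) = 1\<close> by simp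
      qed
    next
      case False
      then show ?thesis by (simp add: O_C_def)
    qed
  qed
  also have "\<dots> = card {vs\<in>Vset k n. D (cnt1 vs) = 1} * (if w \<ge> 1 then O_C D k n (w - 1) else 0)
      + card {vs\<in>Vset k n. D (cnt1 vs) \<noteq> 1} * O_C D k n w"
    by (rule sum_if_const[OF finite_Vset])
  finally show ?thesis .
qed

lemma cnt1_Cons: "cnt1 (x # xs) = (if x = 1 then Suc (cnt1 xs) else cnt1 xs)"
  by (simp add: cnt1_def)

lemma cnt1_le: "cnt1 xs \<le> length xs"
  by (simp add: cnt1_def)

lemma card_cnt: "card {vs \<in> Vset k n. cnt1 vs = b} = (k choose b) * n ^ (k - b)"
proof (induction k arbitrary: b)
  case 0
  have "Vset 0 n = {[]}" by (auto simp: Vset_def)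
  then show ?case
  proof (cases b)
    case 0
    have "{vs \<in> {[]}. cnt1 vs = b} = {[]}" using 0 by (auto simp: cnt1_def)
    then show ?thesis using \<open>Vset 0 n = {[]}\<close> 0 by simp
  next
    case (Suc b')
    have "{vs \<in> {[]}. cnt1 vs = b} = {}" using Suc by (auto simp: cnt1_def)
    then show ?thesis using \<open>Vset 0 n = {[]}\<close> Suc by simp
  qed
next
  case (Suc k)
  have V: "Vset (Suc k) n = (\<lambda>(xs, x). x # xs) ` (Vset k n \<times> {1..Suc n})"
    unfolding Vset_def by (rule lists_length_Suc_eq)
  have "{vs \<in> Vset (Suc k) n. cnt1 vs = b}
      = (\<lambda>(xs, x). x # xs) ` {y \<in> Vset k n \<times> {1..Suc n}. cnt1 (snd y # fst y) = b}"
    unfolding V by auto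
  also have "card \<dots> = card {y \<in> Vset k n \<times> {1..Suc n}. cnt1 (snd y # fst y) = b}"
    by (rule card_image) (auto simp: inj_on_def)
  also have "\<dots> = (\<Sum>x\<in>{1..Suc n}. card {xs\<in>Vset k n. cnt1 (x # xs) = b})"
    by (rule card_prod_split[OF finite_Vset]) simp
  also have "\<dots> = card {xs\<in>Vset k n. cnt1 (1 # xs) = b} + (\<Sum>x\<in>{2..Suc n}. card {xs\<in>Vset k n. cnt1 (x # xs) = b})"
  proof -
    have "{1..Suc n} = insert 1 {2..Suc n}" by auto
    then show ?thesis by simp
  qed
  also have "(\<Sum>x\<in>{2..Suc n}. card {xs\<in>Vset k n. cnt1 (x # xs) = b}) = n * ((k choose b) * n ^ (k - b))"
  proof -
    have "(\<Sum>x\<in>{2..Suc n}. card {xs\<in>Vset k n. cnt1 (x # xs) = b}) = (\<Sum>x\<in>{2..Suc n}. card {xs\<in>Vset k n. cnt1 xs = b})"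
      by (rule sum.cong) (auto simp: cnt1_Cons)
    then show ?thesis using Suc.IH by simp
  qed
  also have "card {xs\<in>Vset k n. cnt1 (1 # xs) = b} = (if b = 0 then 0 else (k choose (b - 1)) * n ^ (k - (b - 1)))"
  proof (cases b)
    case 0 then show ?thesis by (simp add: cnt1_Cons)
  next
    case (Suc b') then show ?thesis using Suc.IH[of b'] by (simp add: cnt1_Cons)
  qed
  also have "(if b = 0 then 0 else (k choose (b - 1)) * n ^ (k - (b - 1))) + n * ((k choose b) * n ^ (k - b))
      = (Suc k choose b) * n ^ (Suc k - b)"
  proof (cases b)
    case 0 then show ?thesis by simp
  next
    case (Suc b')
    show ?thesis
    proof (cases "b \<le> k")
      case True
      have "k - b' = Suc (k - b)" using Suc True by simp
      then have "n * n ^ (k - b) = n ^ (k - b')" by simp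
      then show ?thesis using Suc True by (simp add: algebra_simps)
    next
      case False
      then show ?thesis using Suc by simp
    qed
  qed
  finally show ?case .
qed

lemma card_cnt_pred:
  "card {vs\<in>Vset k n. P (cnt1 vs)} = (\<Sum>b=0..k. if P b then (k choose b) * n ^ (k - b) else 0)"
proof -
  define S where "S = {vs\<in>Vset k n. P (cnt1 vs)}"
  have fS: "finite S" using finite_Vset by (simp add: S_def)
  have img: "cnt1 ` S \<subseteq> {0..k}" using cnt1_le by (auto simp: S_def Vset_def)
  have "card S = (\<Sum>b\<in>{0..k}. card {x\<in>S. cnt1 x = b})"
  proof -
    have "(\<Sum>b\<in>{0..k}. sum (\<lambda>_. 1::nat) {x\<in>S. cnt1 x = b}) = sum (\<lambda>_. 1) S"
      by (rule sum.group[OF fS _ img]) simp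
    then show ?thesis by (simp only: card_eq_sum)
  qed
  also have "\<dots> = (\<Sum>b=0..k. if P b then (k choose b) * n ^ (k - b) else 0)"
  proof (rule sum.cong[OF refl])
    fix b
    have "{x\<in>S. cnt1 x = b} = (if P b then {vs\<in>Vset k n. cnt1 vs = b} else {})"
      by (auto simp: S_def)
    then show "card {x\<in>S. cnt1 x = b} = (if P b then (k choose b) * n ^ (k - b) else 0)"
      by (simp add: card_cnt)
  qed
  finally show ?thesis by (simp add: S_def)
qed



lemma O_C_0: "O_C D k 0 w = (if w = 0 then 1 else 0)"
proof -
  have os: "opt_set D 0 ps = {}" for ps by (simp add: opt_set_def)
  have "card (perm_tuples k 0) = 1" by (simp add: card_perm_tuples)
  then show ?thesis by (simp add: O_C_def os)
qed

definition acoef :: "(nat \<Rightarrow> nat) \<Rightarrow> nat \<Rightarrow> nat \<Rightarrow> real" where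
  "acoef D k n = (\<Sum>b=0..k. real (D b) * real (k choose b) * real n ^ (k - b))"

lemma card_cnt_real:
  assumes D: "\<forall>b\<le>k. D b \<in> {0, 1}"
  shows "real (card {vs\<in>Vset k n. D (cnt1 vs) = 1}) = acoef D k n"
    and "real (card {vs\<in>Vset k n. D (cnt1 vs) \<noteq> 1}) = acoef (compl_vec D) k n"
proof -
  show "real (card {vs\<in>Vset k n. D (cnt1 vs) = 1}) = acoef D k n"
    unfolding card_cnt_pred[of k n "\<lambda>b. D b = 1"] acoef_def of_nat_sum
  proof (rule sum.cong[OF refl])
    fix b assume "b \<in> {0..k}"
    then have "D b \<in> {0,1}" using D by auto
    then show "real (if D b = 1 then (k choose b) * n ^ (k - b) else 0) = real (D b) * real (k choose b) * real n ^ (k - b)"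
      by auto
  qed
  show "real (card {vs\<in>Vset k n. D (cnt1 vs) \<noteq> 1}) = acoef (compl_vec D) k n"
    unfolding card_cnt_pred[of k n "\<lambda>b. D b \<noteq> 1"] acoef_def of_nat_sum
  proof (rule sum.cong[OF refl])
    fix b assume "b \<in> {0..k}"
    then have "D b \<in> {0,1}" using D by auto
    then show "real (if D b \<noteq> 1 then (k choose b) * n ^ (k - b) else 0) = real (compl_vec D b) * real (k choose b) * real n ^ (k - b)"
      by (auto simp: compl_vec_def)
  qed
qed

lemma O_C_Suc_real:
  assumes D: "\<forall>b\<le>k. D b \<in> {0, 1}"
  shows "real (O_C D k (Suc n) w) = acoef D k n * (if w \<ge> 1 then real (O_C D k n (w - 1)) else 0)
      + acoef (compl_vec D) k n * real (O_C D k n w)"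
  unfolding O_C_Suc_nat[of D k n w] using card_cnt_real[OF D, of n]
  by (simp add: of_nat_mult)

lemma acoef_F:
  assumes "n \<ge> 1"
  shows "acoef E k n = real n ^ k * F_vec E k (Suc n)"
  unfolding acoef_def F_vec_def sum_distrib_left
proof (rule sum.cong[OF refl])
  fix b assume b: "b \<in> {0..k}"
  have n: "real n > 0" using assms by simp
  have "real n ^ k = real n ^ (k - b) * real n ^ b" using b by (simp add: power_add[symmetric])
  then show "real (E b) * real (k choose b) * real n ^ (k - b) =
    real n ^ k * (real (k choose b) * real (E b) / (real (Suc n) - 1) ^ b)"
    using n by (simp add: field_simps)
qed

lemma acoef_0:
  assumes D: "\<forall>b\<le>k. D b \<in> {0, 1}"
  shows "acoef D k 0 = real (D k)" and "acoef (compl_vec D) k 0 = 1 - real (D k)"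
proof -
  have "acoef E k 0 = real (E k)" for E
  proof -
    have "acoef E k 0 = (\<Sum>b\<in>{k}. real (E b) * real (k choose b) * real 0 ^ (k - b))"
      unfolding acoef_def by (rule sum.mono_neutral_right) auto
    then show ?thesis by simp
  qed
  then show "acoef D k 0 = real (D k)" "acoef (compl_vec D) k 0 = 1 - real (D k)"
    using D by (auto simp: compl_vec_def)
qed

lemma F_nonneg: "j \<ge> 2 \<Longrightarrow> F_vec E k j \<ge> 0"
  unfolding F_vec_def by (intro sum_nonneg divide_nonneg_nonneg) auto

lemma F_mono:
  assumes "2 \<le> i" "i \<le> j"
  shows "F_vec E k j \<le> F_vec E k i"
  unfolding F_vec_def
proof (rule sum_mono)
  fix b
  have "0 < (real i - 1) ^ b" using assms by simp
  moreover have "(real i - 1) ^ b \<le> (real j - 1) ^ b" using assms by (intro power_mono) auto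
  ultimately show "real (k choose b) * real (E b) / (real j - 1) ^ b \<le> real (k choose b) * real (E b) / (real i - 1) ^ b"
    by (intro divide_left_mono) auto
qed

lemma H_nonneg: "H_vec E k n \<ge> 0"
  unfolding H_vec_def by (intro sum_nonneg mult_nonneg_nonneg) auto

lemma H_Suc:
  assumes "n \<ge> 1"
  shows "H_vec E k (Suc n) = H_vec E k n + F_vec E k (Suc n)"
proof -
  have "{1..n} = insert n {1..n-1}" using assms by auto
  then have "(\<Sum>j=1..n. 1 / real j ^ b) = (\<Sum>j=1..n-1. 1 / real j ^ b) + 1 / real n ^ b" for b
    using assms by simp
  then show ?thesis
    unfolding H_vec_def F_vec_def by (simp add: sum.distrib[symmetric] algebra_simps)
qed

lemma binom_ineq:
  fixes H A :: real
  assumes "0 \<le> H" "0 \<le> A"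
  shows "H ^ Suc q + real (Suc q) * A * H ^ q \<le> (H + A) ^ Suc q"
proof (induction q)
  case 0 then show ?case by simp
next
  case (Suc q)
  have "H ^ Suc (Suc q) + real (Suc (Suc q)) * A * H ^ Suc q
     \<le> (H ^ Suc q + real (Suc q) * A * H ^ q) * (H + A)"
    using assms by (simp add: algebra_simps)
  also have "\<dots> \<le> (H + A) ^ Suc q * (H + A)"
    using Suc assms by (intro mult_right_mono) auto
  finally show ?case by (simp add: mult.commute)
qed



definition Pc :: "(nat \<Rightarrow> nat) \<Rightarrow> nat \<Rightarrow> nat \<Rightarrow> real" where
  "Pc E k r = (\<Prod>i=1..r. F_vec (compl_vec E) k (i + 1))"

definition Ub :: "(nat \<Rightarrow> nat) \<Rightarrow> nat \<Rightarrow> nat \<Rightarrow> nat \<Rightarrow> real" where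
  "Ub E k n p = (if p < n then H_vec E k n ^ p / fact p * Pc E k (n - Suc p) else 0)"

lemma Pc_nonneg: "Pc E k r \<ge> 0"
  unfolding Pc_def by (intro prod_nonneg) (auto intro: F_nonneg)

lemma Pc_Suc: "Pc E k (Suc r) = Pc E k r * F_vec (compl_vec E) k (Suc r + 1)"
  unfolding Pc_def by (simp add: prod.cl_ivl_Suc)

lemma Ub_nonneg: "Ub E k n p \<ge> 0"
  unfolding Ub_def using Pc_nonneg H_nonneg by auto

lemma Ub_step0:
  assumes "n \<ge> 1"
  shows "F_vec (compl_vec E) k (Suc n) * Ub E k n 0 \<le> Ub E k (Suc n) 0"
proof -
  obtain n' where n: "n = Suc n'" using assms by (cases n) auto
  show ?thesis using Pc_Suc[of E k n'] by (simp add: Ub_def n mult.commute)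
qed

lemma Ub_step:
  assumes "n \<ge> 1"
  shows "F_vec E k (Suc n) * Ub E k n q + F_vec (compl_vec E) k (Suc n) * Ub E k n (Suc q)
     \<le> Ub E k (Suc n) (Suc q)"
proof (cases "q < n")
  case False
  then show ?thesis by (simp add: Ub_def)
next
  case True
  define H where "H = H_vec E k n"
  define A where "A = F_vec E k (Suc n)"
  define B where "B = F_vec (compl_vec E) k (Suc n)"
  define r where "r = n - Suc q"
  have A0: "A \<ge> 0" unfolding A_def using assms by (intro F_nonneg) auto
  have B0: "B \<ge> 0" unfolding B_def using assms by (intro F_nonneg) auto
  have H0: "H \<ge> 0" unfolding H_def by (rule H_nonneg)
  have P0: "Pc E k r \<ge> 0" by (rule Pc_nonneg)
  have HS: "H_vec E k (Suc n) = H + A" unfolding H_def A_def using H_Suc[OF assms] .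
  have U1: "Ub E k n q = H ^ q / fact q * Pc E k r" using True by (simp add: Ub_def H_def r_def)
  have U3: "Ub E k (Suc n) (Suc q) = (H + A) ^ Suc q / fact (Suc q) * Pc E k r"
    using True by (simp add: Ub_def HS r_def)
  have U2: "B * Ub E k n (Suc q) \<le> H ^ Suc q / fact (Suc q) * Pc E k r"
  proof (cases "Suc q < n")
    case False
    then show ?thesis using H0 P0 by (simp add: Ub_def)
  next
    case True
    define r' where "r' = n - Suc (Suc q)"
    have rr: "r = Suc r'" using True by (simp add: r_def r'_def)
    have "B \<le> F_vec (compl_vec E) k (Suc r' + 1)" unfolding B_def
      using True by (intro F_mono) (auto simp: r'_def)
    then have "Pc E k r' * B \<le> Pc E k r" unfolding rr Pc_Suc
      using Pc_nonneg by (intro mult_left_mono) auto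
    then have "H ^ Suc q / fact (Suc q) * (Pc E k r' * B) \<le> H ^ Suc q / fact (Suc q) * Pc E k r"
      using H0 by (intro mult_left_mono) auto
    then show ?thesis using True by (simp add: Ub_def H_def r'_def mult_ac)
  qed
  have "A * Ub E k n q + B * Ub E k n (Suc q) \<le> A * (H ^ q / fact q * Pc E k r) + H ^ Suc q / fact (Suc q) * Pc E k r"
    using U1 U2 by simp
  also have "\<dots> = (H ^ Suc q + real (Suc q) * A * H ^ q) * (Pc E k r / fact (Suc q))"
    by (simp add: field_simps fact_Suc del: of_nat_Suc)
  also have "\<dots> \<le> (H + A) ^ Suc q * (Pc E k r / fact (Suc q))"
    using binom_ineq[OF H0 A0, of q] P0 by (intro mult_right_mono) auto
  also have "\<dots> = Ub E k (Suc n) (Suc q)" using U3 by simp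
  finally show ?thesis by (simp add: A_def B_def)
qed

lemma O_C_bound_Ub:
  assumes D: "\<forall>b\<le>k. D b \<in> {0, 1}" and n: "n \<ge> 1"
  shows "real (O_C D k n w) \<le> fact (n - 1) ^ k * (if D k \<le> w then Ub D k n (w - D k) else 0)"
  using n
proof (induction n arbitrary: w rule: nat_induct_at_least)
  case base
  have U: "Ub D k (Suc 0) p = (if p = 0 then 1 else 0)" for p
    by (simp add: Ub_def Pc_def)
  have F: "real (O_C D k (Suc 0) w) = real (D k) * (if w \<ge> 1 then (if w - 1 = 0 then 1 else 0) else 0)
      + (1 - real (D k)) * (if w = 0 then 1 else 0)"
    using O_C_Suc_real[OF D, of 0 w] acoef_0[OF D] by (simp add: O_C_0)
  have "D k = 0 \<or> D k = 1" using D by auto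
  then have O: "real (O_C D k (Suc 0) w) = (if w = D k then 1 else 0)"
  proof
    assume "D k = 0" then show ?thesis using F by simp
  next
    assume d1: "D k = 1"
    show ?thesis using F d1 by (cases w) auto
  qed
  show ?case unfolding One_nat_def O using U by auto
next
  case (Suc n)
  define d where "d = D k"
  define T where "T m x = (if d \<le> x then Ub D k m (x - d) else 0)" for m x
  define A where "A = F_vec D k (Suc n)"
  define B where "B = F_vec (compl_vec D) k (Suc n)"
  define f :: real where "f = fact (n - 1) ^ k"
  have A0: "A \<ge> 0" unfolding A_def using Suc by (intro F_nonneg) auto
  have B0: "B \<ge> 0" unfolding B_def using Suc by (intro F_nonneg) auto
  have f0: "f \<ge> 0" by (simp add: f_def)
  have nk: "real n ^ k \<ge> 0" by simp
  have IH: "real (O_C D k n x) \<le> f * T n x" for x using Suc.IH[of x] unfolding f_def T_def d_def .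
  have fs: "fact (Suc n - 1) ^ k = real n ^ k * f"
  proof -
    have "fact n = real n * fact (n - 1)" using Suc fact_reduce[of n] by simp
    then show ?thesis by (simp add: f_def power_mult_distrib)
  qed
  have X: "(if w \<ge> 1 then real (O_C D k n (w - 1)) else 0) \<le> f * (if w \<ge> 1 then T n (w - 1) else 0)"
    using IH by auto
  have "real (O_C D k (Suc n) w) = real n ^ k * A * (if w \<ge> 1 then real (O_C D k n (w - 1)) else 0)
      + real n ^ k * B * real (O_C D k n w)"
    using O_C_Suc_real[OF D, of n w] acoef_F[of n D k] acoef_F[of n "compl_vec D" k] Suc
    by (simp add: A_def B_def)
  also have "\<dots> \<le> real n ^ k * A * (f * (if w \<ge> 1 then T n (w - 1) else 0)) + real n ^ k * B * (f * T n w)"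
  proof (rule add_mono)
    show "real n ^ k * A * (if w \<ge> 1 then real (O_C D k n (w - 1)) else 0) \<le> real n ^ k * A * (f * (if w \<ge> 1 then T n (w - 1) else 0))"
      by (rule mult_left_mono[OF X]) (use A0 nk in simp)
    show "real n ^ k * B * real (O_C D k n w) \<le> real n ^ k * B * (f * T n w)"
      by (rule mult_left_mono[OF IH[of w]]) (use B0 nk in simp)
  qed
  also have "\<dots> = real n ^ k * f * (A * (if w \<ge> 1 then T n (w - 1) else 0) + B * T n w)"
    by (simp add: algebra_simps)
  also have "A * (if w \<ge> 1 then T n (w - 1) else 0) + B * T n w \<le> T (Suc n) w"
  proof -
    have "w < d \<or> w = d \<or> (w - d = Suc (w - Suc d) \<and> d \<le> w)" by linarith
    then consider (lt) "w < d" | (eq) "w = d" | (gt) q where "w - d = Suc q" "d \<le> w"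
      by blast
    then show ?thesis
    proof cases
      case lt
      then have "\<not> d \<le> w" "\<not> d \<le> w - 1" by auto
      then show ?thesis by (simp add: T_def)
    next
      case eq
      have "B * Ub D k n 0 \<le> Ub D k (Suc n) 0" unfolding B_def using Ub_step0 Suc by auto
      moreover have "\<not> (w \<ge> 1 \<and> d \<le> w - 1)" using eq by auto
      ultimately show ?thesis using eq by (auto simp: T_def)
    next
      case gt
      have "w - 1 - d = q" using gt by simp
      moreover have "d \<le> w - 1" "w \<ge> 1" using gt by auto
      ultimately have "A * (if w \<ge> 1 then T n (w - 1) else 0) + B * T n w
          = A * Ub D k n q + B * Ub D k n (Suc q)" using gt by (simp add: T_def)
      also have "\<dots> \<le> Ub D k (Suc n) (Suc q)" unfolding A_def B_def using Ub_step Suc by auto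
      also have "\<dots> = T (Suc n) w" using gt by (simp add: T_def)
      finally show ?thesis .
    qed
  qed
  then have "real n ^ k * f * (A * (if w \<ge> 1 then T n (w - 1) else 0) + B * T n w) \<le> real n ^ k * f * T (Suc n) w"
    using f0 nk by (intro mult_left_mono) auto
  also have "real n ^ k * f * T (Suc n) w = fact (Suc n - 1) ^ k * (if D k \<le> w then Ub D k (Suc n) (w - D k) else 0)"
    by (simp only: fs T_def d_def)
  finally show ?case .
qed

lemma Omax_Ub:
  "Omax D k n (int w) = fact (n - 1) ^ k * (if D k \<le> w then Ub D k n (w - D k) else 0)"
proof (cases "D k \<le> w \<and> w - D k < n")
  case True
  then have m: "nat (int w + 1 - int (D k)) = Suc (w - D k)" by auto
  show ?thesis using True unfolding Omax_def Let_def m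
    by (auto simp: Ub_def Pc_def)
next
  case False
  then show ?thesis unfolding Omax_def by (auto simp: Ub_def)
qed

theorem O_C_le_Omax:
  assumes D: "\<forall>b\<le>k. D b \<in> {0, 1}" and n: "n \<ge> 1"
  shows "real (O_C D k n w) \<le> Omax D k n (int w)"
  using O_C_bound_Ub[OF D n] Omax_Ub by simp



lemma exp_partial:
  fixes x :: real
  assumes "0 \<le> x"
  shows "(\<Sum>p<n. x ^ p / fact p) \<le> exp x"
  using assms summable_exp_generic[of x]
  by (auto simp: exp_def divide_inverse ac_simps intro!: sum_le_suminf)

lemma F_le_pow:
  assumes j: "j \<ge> 2"
  shows "F_vec (compl_vec E) k j \<le> (1 + 1 / (real j - 1)) ^ k"
proof -
  have "F_vec (compl_vec E) k j \<le> (\<Sum>b=0..k. real (k choose b) * 1 / (real j - 1) ^ b)"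
    unfolding F_vec_def
  proof (rule sum_mono)
    fix b
    have "real (compl_vec E b) \<le> 1" by (simp add: compl_vec_def)
    then show "real (k choose b) * real (compl_vec E b) / (real j - 1) ^ b \<le> real (k choose b) * 1 / (real j - 1) ^ b"
      using j by (intro divide_right_mono mult_left_mono) auto
  qed
  also have "\<dots> = (\<Sum>b\<le>k. real (k choose b) * (1 / (real j - 1)) ^ b * 1 ^ (k - b))"
    by (simp add: atLeast0AtMost power_divide)
  also have "\<dots> = (1 / (real j - 1) + 1) ^ k"
    by (rule binomial_ring[symmetric])
  finally show ?thesis by (simp add: add.commute)
qed

lemma Pc_le: "Pc E k r \<le> (real r + 1) ^ k"
proof (induction r)
  case 0 then show ?case by (simp add: Pc_def)
next
  case (Suc r)
  have F0: "F_vec (compl_vec E) k (Suc r + 1) \<ge> 0" by (intro F_nonneg) auto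
  have "Pc E k (Suc r) = Pc E k r * F_vec (compl_vec E) k (Suc r + 1)" by (rule Pc_Suc)
  also have "\<dots> \<le> (real r + 1) ^ k * (1 + 1 / (real (Suc r + 1) - 1)) ^ k"
    using Suc Pc_nonneg F0 F_le_pow[of "Suc r + 1" E k] by (intro mult_mono) auto
  also have "\<dots> = ((real r + 1) * (1 + 1 / (real r + 1))) ^ k"
    by (simp add: power_mult_distrib add.commute)
  also have "(real r + 1) * (1 + 1 / (real r + 1)) = real (Suc r) + 1"
    by (simp add: field_simps)
  finally show ?case .
qed

lemma Ub_le:
  assumes "p < n"
  shows "Ub E k n p \<le> H_vec E k n ^ p / fact p * (real n - real p) ^ k"
proof -
  have "Pc E k (n - Suc p) \<le> (real (n - Suc p) + 1) ^ k" by (rule Pc_le)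
  also have "real (n - Suc p) + 1 = real n - real p" using assms by (simp add: of_nat_diff)
  finally have "Pc E k (n - Suc p) \<le> (real n - real p) ^ k" .
  then have "H_vec E k n ^ p / fact p * Pc E k (n - Suc p) \<le> H_vec E k n ^ p / fact p * (real n - real p) ^ k"
    using H_nonneg[of E k n] by (intro mult_left_mono) auto
  then show ?thesis using assms by (simp add: Ub_def)
qed

lemma sum_O_C: "(\<Sum>m=0..n. real (O_C E k n m)) = fact n ^ k"
proof -
  have img: "(\<lambda>ps. card (opt_set E n ps)) ` perm_tuples k n \<subseteq> {0..n}"
  proof
    fix y assume "y \<in> (\<lambda>ps. card (opt_set E n ps)) ` perm_tuples k n"
    then obtain ps where "y = card (opt_set E n ps)" by blast
    moreover have "card (opt_set E n ps) \<le> card {1..n}"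
      by (rule card_mono) (auto simp: opt_set_def)
    ultimately show "y \<in> {0..n}" by simp
  qed
  have "(\<Sum>m\<in>{0..n}. sum (\<lambda>_. 1::nat) {ps \<in> perm_tuples k n. card (opt_set E n ps) = m}) = sum (\<lambda>_. 1) (perm_tuples k n)"
    by (rule sum.group[OF finite_perm_tuples _ img]) simp
  then have "(\<Sum>m=0..n. O_C E k n m) = fact n ^ k"
    by (simp only: card_eq_sum[symmetric] O_C_def card_perm_tuples)
  then have "real (\<Sum>m=0..n. O_C E k n m) = fact n ^ k" by simp
  then show ?thesis by (simp only: of_nat_sum)
qed

lemma sum_Omax:
  assumes D: "D k \<in> {0, 1}"
  shows "(\<Sum>m=0..n. Omax D k n (int m)) = fact (n - 1) ^ k * (\<Sum>p<n. Ub D k n p)"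
proof -
  have "(\<Sum>m=0..n. Omax D k n (int m)) = fact (n - 1) ^ k * (\<Sum>m=0..n. if D k \<le> m then Ub D k n (m - D k) else 0)"
    by (simp add: Omax_Ub sum_distrib_left)
  also have "(\<Sum>m=0..n. if D k \<le> m then Ub D k n (m - D k) else 0) = (\<Sum>p<n. Ub D k n p)"
  proof (cases "D k = 0")
    case True
    have "{0..n} = insert n {..<n}" by auto
    then have "(\<Sum>m=0..n. Ub D k n m) = (\<Sum>p<n. Ub D k n p) + Ub D k n n" by simp
    then show ?thesis using True by (simp add: Ub_def)
  next
    case False
    then have d: "D k = 1" using D by auto
    have "{0..n} = insert 0 {Suc 0..n}" by auto
    then have "(\<Sum>m=0..n. if D k \<le> m then Ub D k n (m - D k) else 0) = (\<Sum>m=Suc 0..n. Ub D k n (m - 1))"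
      using d by simp
    also have "\<dots> = (\<Sum>p<n. Ub D k n p)"
    proof (cases n)
      case 0 then show ?thesis by simp
    next
      case (Suc n')
      have "(\<Sum>m=Suc 0..Suc n'. Ub D k n (m - 1)) = (\<Sum>p=0..n'. Ub D k n p)"
        by (subst sum.shift_bounds_cl_Suc_ivl) simp
      also have "\<dots> = (\<Sum>p<n. Ub D k n p)" using Suc by (simp add: atLeast0AtMost lessThan_Suc_atMost)
      finally show ?thesis using Suc by simp
    qed
    finally show ?thesis .
  qed
  finally show ?thesis .
qed

lemma ratio_le_series:
  assumes D: "D k \<in> {0, 1}" and n: "n \<ge> 1"
  shows "(\<Sum>m=0..n. Omax D k n (int m)) / (\<Sum>m=0..n. real (O_C E k n m))
     \<le> (\<Sum>p<n. H_vec D k n ^ p / fact p * ((real n - real p) / real n) ^ k)"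
proof -
  have fn: "(fact n :: real) = real n * fact (n - 1)" using n fact_reduce[of n] by simp
  have pos: "(fact (n - 1) :: real) ^ k > 0" "real n ^ k > 0" using n by auto
  have "(\<Sum>m=0..n. Omax D k n (int m)) / (\<Sum>m=0..n. real (O_C E k n m))
      = (fact (n - 1) ^ k * (\<Sum>p<n. Ub D k n p)) / (real n ^ k * fact (n - 1) ^ k)"
    by (simp add: sum_Omax[of D k n, OF D] sum_O_C fn power_mult_distrib)
  also have "\<dots> = (\<Sum>p<n. Ub D k n p) / real n ^ k" using pos by simp
  also have "\<dots> = (\<Sum>p<n. Ub D k n p / real n ^ k)" by (simp add: sum_divide_distrib)
  also have "\<dots> \<le> (\<Sum>p<n. H_vec D k n ^ p / fact p * ((real n - real p) / real n) ^ k)"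
  proof (rule sum_mono)
    fix p assume "p \<in> {..<n}"
    then have "Ub D k n p \<le> H_vec D k n ^ p / fact p * (real n - real p) ^ k" using Ub_le by auto
    then have "Ub D k n p / real n ^ k \<le> H_vec D k n ^ p / fact p * (real n - real p) ^ k / real n ^ k"
      using pos by (intro divide_right_mono) auto
    then show "Ub D k n p / real n ^ k \<le> H_vec D k n ^ p / fact p * ((real n - real p) / real n) ^ k"
      by (simp add: power_divide)
  qed
  finally show ?thesis .
qed



lemma H_decomp:
  assumes k: "k \<ge> 1"
  shows "H_vec D k n = real (D 0) * real (n - 1) + real (D 1) * real k * harm (n - 1)
    + (\<Sum>b=2..k. real (D b) * real (k choose b) * (\<Sum>j=1..n-1. 1 / real j ^ b))"
proof -
  define f where "f b = real (D b) * real (k choose b) * (\<Sum>j=1..n-1. 1 / real j ^ b)" for b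
  have s1: "sum f {0..k} = f 0 + sum f {Suc 0..k}" by (rule sum.atLeast_Suc_atMost) simp
  have s2: "sum f {Suc 0..k} = f (Suc 0) + sum f {Suc (Suc 0)..k}" using k by (intro sum.atLeast_Suc_atMost) simp
  have "H_vec D k n = f 0 + (f 1 + sum f {2..k})"
    unfolding H_vec_def f_def[symmetric] s1 s2 by (simp add: numeral_2_eq_2)
  then have "H_vec D k n = real (D 0) * real (k choose 0) * (\<Sum>j=1..n-1. 1 / real j ^ 0)
     + (real (D 1) * real (k choose 1) * (\<Sum>j=1..n-1. 1 / real j ^ 1)
     + (\<Sum>b=2..k. real (D b) * real (k choose b) * (\<Sum>j=1..n-1. 1 / real j ^ b)))"
    by (simp add: f_def)
  moreover have "(\<Sum>j=1..n-1. 1 / real j ^ 1) = harm (n - 1)"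
    by (simp add: harm_def inverse_eq_divide)
  ultimately show ?thesis by simp
qed

lemma S_le:
  assumes b: "b \<ge> 2"
  shows "(\<Sum>j=1..N. 1 / real j ^ b) \<le> pi\<^sup>2 / 6"
proof -
  have "(\<Sum>j=1..N. 1 / real j ^ b) \<le> (\<Sum>j=1..N. 1 / real j ^ 2)"
  proof (rule sum_mono)
    fix j assume j: "j \<in> {1..N}"
    have "real j ^ 2 \<le> real j ^ b" using j b by (intro power_increasing) auto
    moreover have "real j ^ 2 > 0" using j by auto
    ultimately show "1 / real j ^ b \<le> 1 / real j ^ 2" by (intro divide_left_mono) auto
  qed
  also have "(\<Sum>j=1..N. 1 / real j ^ 2) = (\<Sum>i<N. 1 / real ((i + 1) ^ 2))"
  proof -
    have "(\<Sum>j=1..M. g j) = (\<Sum>i<M. g (Suc i))" for M and g :: "nat \<Rightarrow> real"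
      by (induction M) simp_all
    from this[where M=N and g="\<lambda>j. 1 / real j ^ 2"] show ?thesis by simp
  qed
  also have "\<dots> \<le> (\<Sum>i. 1 / real ((i + 1) ^ 2))"
    by (rule sum_le_suminf[OF sums_summable[OF inverse_squares_sums]]) auto
  also have "\<dots> = pi\<^sup>2 / 6" using sums_unique[OF inverse_squares_sums] by simp
  finally show ?thesis .
qed

lemma harm_exp_bound:
  assumes n: "n \<ge> 3"
  shows "harm (n - 1) * exp (- 1 / real n) \<le> ln (real n - 1) + euler_mascheroni"
proof -
  define N where "N = n - 1"
  have N2: "N \<ge> 2" and nN: "real n = real N + 1" using n by (auto simp: N_def)
  define G where "G = ln (real N) + euler_mascheroni"
  have "ln (2::real) \<le> ln (real N)" using N2 by simp
  then have G1: "G \<ge> 1" using ln2_ge_two_thirds euler_mascheroni_gt_19_over_33 by (simp add: G_def)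
  have lo: "euler_mascheroni \<ge> harm (Suc (N - 1)) - ln (real (N - 1 + 2)) + 1 / real (2 * (N - 1 + 2))"
    by (rule euler_mascheroni_lower)
  have "Suc (N - 1) = N" "N - 1 + 2 = N + 1" using N2 by auto
  then have h1: "harm N \<le> euler_mascheroni + ln (real N + 1) - 1 / (2 * (real N + 1))"
    using lo by (simp add: add.commute)
  have "ln (real N + 1) - ln (real N) < 1 / real N" using N2 by (intro ln_diff_le_inverse) auto
  then have h2: "harm N \<le> G + 1 / real N - 1 / (2 * (real N + 1))" using h1 by (simp add: G_def)
  have aux: "1/x - 1/(2*(x+1)) \<le> 1/(x+1)" if x: "(x::real) \<ge> 2" for x
  proof -
    have "1/x = 3/(3*x)" using x by simp
    also have "\<dots> \<le> 3/(2*(x+1))" by (rule divide_left_mono) (use x in auto)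
    finally have h: "1/x \<le> 3/(2*(x+1))" .
    have "3/(2*y) - 1/(2*y) = 1/(y::real)" for y by (cases "y = 0") (simp_all add: field_simps)
    then have e: "3/(2*(x+1)) - 1/(2*(x+1)) = 1/(x+1)" .
    have "1/x - 1/(2*(x+1)) \<le> 3/(2*(x+1)) - 1/(2*(x+1))" using h by (rule diff_right_mono)
    also note e
    finally show ?thesis .
  qed
  have "1 / real N - 1 / (2 * (real N + 1)) \<le> 1 / (real N + 1)"
    using aux[of "real N"] N2 by simp
  also have "\<dots> \<le> G / (real N + 1)" using G1 by (simp add: divide_right_mono)
  finally have h25: "1 / real N - 1 / (2 * (real N + 1)) \<le> G / (real N + 1)" .
  have "harm N \<le> G + G / (real N + 1)" using h2 h25 by linarith
  also have "\<dots> = G * (1 + 1 / (real N + 1))" by (simp add: distrib_left)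
  finally have h3: "harm N \<le> G * (1 + 1 / (real N + 1))" .
  have "exp (1 / real n) \<ge> 1 + 1 / real n" by (rule exp_ge_add_one_self)
  then have e: "exp (- 1 / real n) \<le> 1 / (1 + 1 / real n)"
    using n by (simp add: exp_minus field_simps)
  have "harm N * exp (- 1 / real n) \<le> G * (1 + 1 / real n) * (1 / (1 + 1 / real n))"
    using h3 e harm_nonneg[of N] nN by (intro mult_mono) (auto intro: order_trans[OF harm_nonneg h3])
  also have "\<dots> = G"
  proof -
    have "1 / real n \<ge> 0" by simp
    then have a: "1 + 1 / real n \<noteq> 0" by linarith
    have gen: "G * a * (1 / a) = G" if "a \<noteq> 0" for a :: real using that by simp
    show ?thesis by (rule gen[OF a])
  qed
  finally have fin: "harm N * exp (- 1 / real n) \<le> G" .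
  have "real n - 1 = real N" using nN by simp
  then have e1: "ln (real n - 1) = ln (real N)" by (rule arg_cong)
  show ?thesis using fin unfolding e1 G_def N_def .
qed



lemma exp_pow_swap: "exp (- real p / real n) ^ k = exp (- real k / real n) ^ p"
proof -
  have "exp (- real p / real n) ^ k = exp (real k * (- real p / real n))" by (rule exp_of_nat_mult[symmetric])
  also have "real k * (- real p / real n) = real p * (- real k / real n)" by simp
  also have "exp \<dots> = exp (- real k / real n) ^ p" by (rule exp_of_nat_mult)
  finally show ?thesis .
qed

lemma ratio_main:
  assumes D: "\<forall>b\<le>k. D b \<in> {0, 1}" and k: "k \<ge> 1" and n: "n \<ge> 2"
  shows "(\<Sum>m=0..n. Omax D k n (int m)) / (\<Sum>m=0..n. real (O_C E k n m))
    \<le> exp (real (D 0) * (real n - 1) + real (D 1) * real k * (ln (real n - 1) + euler_mascheroni)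
         + pi\<^sup>2 / 6 * (\<Sum>b=2..k. real (D b) * real (k choose b)))"
proof -
  define H where "H = H_vec D k n"
  define L where "L = (harm (n - 1) :: real)"
  define R where "R = (\<Sum>b=2..k. real (D b) * real (k choose b) * (\<Sum>j=1..n-1. 1 / real j ^ b))"
  define lam2 where "lam2 = pi\<^sup>2 / 6 * (\<Sum>b=2..k. real (D b) * real (k choose b))"
  define a0 where "a0 = real (D 0) * (real n - 1)"
  define lam where "lam = a0 + real (D 1) * real k * (ln (real n - 1) + euler_mascheroni) + lam2"
  have rn: "real (n - 1) = real n - 1" using n by (simp add: of_nat_diff)
  have Hd: "H = a0 + real (D 1) * real k * L + R"
    unfolding H_def a0_def L_def R_def H_decomp[OF k] rn ..
  have R0: "R \<ge> 0" unfolding R_def by (intro sum_nonneg mult_nonneg_nonneg) auto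
  have l2: "lam2 = (\<Sum>b=2..k. pi\<^sup>2 / 6 * (real (D b) * real (k choose b)))"
    unfolding lam2_def by (rule sum_distrib_left)
  have Rle: "R \<le> lam2"
    unfolding R_def l2
  proof (rule sum_mono)
    fix b assume b: "b \<in> {2..k}"
    have "(\<Sum>j=1..n-1. 1 / real j ^ b) \<le> pi\<^sup>2 / 6" using b by (intro S_le) auto
    moreover have c0: "real (D b) * real (k choose b) \<ge> 0" by simp
    ultimately have "real (D b) * real (k choose b) * (\<Sum>j=1..n-1. 1 / real j ^ b) \<le> real (D b) * real (k choose b) * (pi\<^sup>2 / 6)"
      by (intro mult_left_mono)
    then show "real (D b) * real (k choose b) * (\<Sum>j=1..n-1. 1 / real j ^ b) \<le> pi\<^sup>2 / 6 * (real (D b) * real (k choose b))"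
      by (simp only: mult.commute)
  qed
  have a00: "a0 \<ge> 0" unfolding a0_def using n by simp
  have L0: "L \<ge> 0" unfolding L_def by (rule harm_nonneg)
  have H0: "H \<ge> 0" unfolding H_def by (rule H_nonneg)
  have Dk: "D k \<in> {0, 1}" using D by auto
  have ser: "(\<Sum>m=0..n. Omax D k n (int m)) / (\<Sum>m=0..n. real (O_C E k n m))
     \<le> (\<Sum>p<n. H ^ p / fact p * ((real n - real p) / real n) ^ k)"
    unfolding H_def using ratio_le_series[of D k n E, OF Dk] n by simp
  have q0: "0 \<le> (real n - real p) / real n" if "p < n" for p using that by simp
  have q1: "(real n - real p) / real n \<le> 1" if "p < n" for p using that n by simp
  have "D 1 \<in> {0, 1}" using D k by auto
  then consider (c0) "D 1 = 0" | (c1) "D 1 = 1" by auto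
  then have "(\<Sum>p<n. H ^ p / fact p * ((real n - real p) / real n) ^ k) \<le> exp lam"
  proof cases
    case c0
    have "(\<Sum>p<n. H ^ p / fact p * ((real n - real p) / real n) ^ k) \<le> (\<Sum>p<n. H ^ p / fact p)"
    proof (rule sum_mono)
      fix p assume "p \<in> {..<n}"
      then have "((real n - real p) / real n) ^ k \<le> 1" using q0 q1 by (intro power_le_one) auto
      then have "H ^ p / fact p * ((real n - real p) / real n) ^ k \<le> H ^ p / fact p * 1"
        using H0 by (intro mult_left_mono) auto
      then show "H ^ p / fact p * ((real n - real p) / real n) ^ k \<le> H ^ p / fact p"
        by simp
    qed
    also have "\<dots> \<le> exp H" by (rule exp_partial[OF H0])
    also have "H \<le> lam" using Hd Rle c0 by (simp add: lam_def)
    then have "exp H \<le> exp lam" by simp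
    finally show ?thesis .
  next
    case c1
    show ?thesis
    proof (cases "n = 2")
      case True
      have "(\<Sum>p<n. H ^ p / fact p * ((real n - real p) / real n) ^ k) = 1 + H * (1 / 2) ^ k"
        using True by (simp add: numeral_2_eq_2)
      also have "(1 / 2 :: real) ^ k \<le> (1 / 2) ^ 1" using k by (intro power_decreasing) auto
      then have "H * (1 / 2) ^ k \<le> H * (1 / 2) ^ 1" using H0 by (intro mult_left_mono) auto
      then have "1 + H * (1 / 2) ^ k \<le> 1 + H / 2" by simp
      also have "H / 2 \<le> lam"
      proof -
        have L1: "L = 1" using True by (simp add: L_def harm_expand)
        have g: "euler_mascheroni \<ge> (1 / 2 :: real)" using euler_mascheroni_gt_19_over_33 by simp
        have "real k * (1 / 2) \<le> real k * euler_mascheroni" using g by (intro mult_left_mono) auto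
        moreover have "ln (real n - 1) = 0" using True by simp
        moreover have "lam2 \<ge> 0" using R0 Rle by simp
        ultimately show ?thesis using Hd c1 L1 a00 R0 Rle by (simp add: lam_def)
      qed
      then have "1 + H / 2 \<le> 1 + lam" by simp
      also have "\<dots> \<le> exp lam" by (rule exp_ge_add_one_self)
      finally show ?thesis by simp
    next
      case False
      then have n3: "n \<ge> 3" using n by simp
      define e where "e = exp (- real k / real n)"
      have e0: "e \<ge> 0" and e1: "e \<le> 1" unfolding e_def using n by auto
      have "(\<Sum>p<n. H ^ p / fact p * ((real n - real p) / real n) ^ k) \<le> (\<Sum>p<n. (H * e) ^ p / fact p)"
      proof (rule sum_mono)
        fix p assume p: "p \<in> {..<n}"
        have "(real n - real p) / real n = 1 + (- real p / real n)" using n by (simp add: field_simps)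
        also have "\<dots> \<le> exp (- real p / real n)" by (rule exp_ge_add_one_self)
        finally have "((real n - real p) / real n) ^ k \<le> exp (- real p / real n) ^ k"
          using q0 p by (intro power_mono) auto
        also have "\<dots> = e ^ p" unfolding e_def by (rule exp_pow_swap)
        finally have "((real n - real p) / real n) ^ k \<le> e ^ p" .
        then have "H ^ p / fact p * ((real n - real p) / real n) ^ k \<le> H ^ p / fact p * e ^ p"
          using H0 by (intro mult_left_mono) auto
        then show "H ^ p / fact p * ((real n - real p) / real n) ^ k \<le> (H * e) ^ p / fact p"
          by (simp add: power_mult_distrib)
      qed
      also have "\<dots> \<le> exp (H * e)" using H0 e0 by (intro exp_partial) auto
      also have "H * e \<le> lam"
      proof -
        have ee: "e \<le> exp (- 1 / real n)" unfolding e_def using k n by (simp add: divide_right_mono)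
        have "(a0 + R) * e \<le> a0 + R" using a00 R0 e1 by (simp add: mult_left_le)
        moreover have "real k * L * e \<le> real k * L * exp (- 1 / real n)"
          using ee L0 by (intro mult_left_mono) auto
        then have "real k * L * e \<le> real k * (L * exp (- 1 / real n))" by (simp only: mult.assoc)
        moreover have "L * exp (- 1 / real n) \<le> ln (real n - 1) + euler_mascheroni"
          unfolding L_def by (rule harm_exp_bound[OF n3])
        then have "real k * (L * exp (- 1 / real n)) \<le> real k * (ln (real n - 1) + euler_mascheroni)"
          by (intro mult_left_mono) auto
        ultimately have "H * e \<le> a0 + R + real k * (ln (real n - 1) + euler_mascheroni)"
          using Hd c1 by (simp add: algebra_simps)
        then show ?thesis using Rle c1 by (simp add: lam_def)
      qed
      then have "exp (H * e) \<le> exp lam" by simp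
      finally show ?thesis .
    qed
  qed
  then show ?thesis using ser by (simp add: lam_def a0_def lam2_def)
qed



lemma ln2_low: "ln (2::real) \<ge> 0.69314718"
proof -
  from ln_approx_bounds[of 2 9] show ?thesis by (simp add: eval_nat_numeral)
qed

lemma ln17811_low: "ln (1.7811::real) \<ge> 0.57723"
proof -
  from ln_approx_bounds[of "1.7811" 5] show ?thesis by (simp add: eval_nat_numeral)
qed

lemma harm255: "harm 255 \<le> (6.12044::real)"
  by (simp add: harm_expand)

lemma exp_gamma_le: "exp (euler_mascheroni :: real) \<le> 1.7811"
proof -
  have up: "(euler_mascheroni::real) \<le> harm (Suc 254) - ln (real (254 + 2)) + 1 / real (2 * (254 + 1))"
    by (rule euler_mascheroni_upper)
  have e: "real (254 + 2 :: nat) = (2::real) ^ 8" by simp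
  have "ln ((2::real) ^ 8) = real (8::nat) * ln 2" by (rule ln_realpow)
  then have l256: "ln (real (254 + 2 :: nat)) = 8 * ln 2" unfolding e by simp
  have "harm (Suc 254) = (harm 255 :: real)" by simp
  then have "(euler_mascheroni::real) \<le> 6.12044 - 8 * 0.69314718 + 1 / 510"
    using up l256 harm255 ln2_low by simp
  also have "\<dots> \<le> ln 1.7811" using ln17811_low by simp
  finally have "euler_mascheroni \<le> ln (1.7811::real)" .
  then have "exp euler_mascheroni \<le> exp (ln (1.7811::real))" by (simp only: exp_le_cancel_iff)
  also have "exp (ln (1.7811::real)) = 1.7811" by (rule exp_ln) simp
  finally show ?thesis .
qed



lemma rec_count_le:
  assumes "ps \<in> perm_tuples k n" shows "rec_count ps a \<le> k"
proof -
  have "length ps = k" using assms by (simp add: perm_tuples_def)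
  moreover have "length (filter (\<lambda>p. is_record p a) ps) \<le> length ps" by (rule length_filter_le)
  ultimately show ?thesis by (simp add: rec_count_def)
qed

lemma O_C_compl:
  assumes c: "\<forall>b\<le>k. c b \<in> {0, 1}" and m: "m \<le> n"
  shows "O_C c k n m = O_C (compl_vec c) k n (n - m)"
proof -
  have key: "card (opt_set (compl_vec c) n ps) = n - card (opt_set c n ps) \<and> card (opt_set c n ps) \<le> n"
    if ps: "ps \<in> perm_tuples k n" for ps
  proof -
    have "opt_set (compl_vec c) n ps = {1..n} - opt_set c n ps"
    proof -
      have iff: "compl_vec c (rec_count ps a) = 1 \<longleftrightarrow> \<not> c (rec_count ps a) = 1" for a
      proof -
        have "rec_count ps a \<le> k" by (rule rec_count_le[OF ps])
        then have "c (rec_count ps a) \<in> {0, 1}" using c by blast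
        then have "c (rec_count ps a) = 0 \<or> c (rec_count ps a) = 1" by simp
        then show ?thesis by (elim disjE) (simp_all add: compl_vec_def)
      qed
      show ?thesis unfolding opt_set_def using iff by blast
    qed
    moreover have sub: "opt_set c n ps \<subseteq> {1..n}" by (auto simp: opt_set_def)
    moreover have fin: "finite (opt_set c n ps)" by (rule finite_subset[OF sub]) simp
    ultimately have "card (opt_set (compl_vec c) n ps) = card {1..n} - card (opt_set c n ps)"
      using card_Diff_subset[OF fin sub] by simp
    moreover have "card (opt_set c n ps) \<le> card {1..n}" using sub by (intro card_mono) auto
    ultimately show ?thesis by simp
  qed
  have "{ps \<in> perm_tuples k n. card (opt_set c n ps) = m} = {ps \<in> perm_tuples k n. card (opt_set (compl_vec c) n ps) = n - m}"
  proof (rule Collect_cong)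
    fix ps
    show "(ps \<in> perm_tuples k n \<and> card (opt_set c n ps) = m) = (ps \<in> perm_tuples k n \<and> card (opt_set (compl_vec c) n ps) = n - m)"
    proof (cases "ps \<in> perm_tuples k n")
      case True
      then have "card (opt_set (compl_vec c) n ps) = n - card (opt_set c n ps)" "card (opt_set c n ps) \<le> n"
        using key by auto
      then show ?thesis using True m by auto
    next
      case False then show ?thesis by simp
    qed
  qed
  then show ?thesis by (simp add: O_C_def)
qed

lemma compl_01: "\<forall>b\<le>k. compl_vec c b \<in> {0, 1}"
  by (auto simp: compl_vec_def)

lemma shift_sum: "(\<Sum>j=Suc 0..M. g j) = (\<Sum>i<M. g (Suc i))" for g :: "nat \<Rightarrow> real"
  by (induction M) simp_all

lemma sum_su_max:
  assumes n: "n \<ge> 1"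
  shows "(\<Sum>m=0..n. su_max n m) = fact (n - 1) * (\<Sum>p<n. (\<Sum>i=1..n-1. 1 / real i) ^ p / fact p)"
proof -
  define L where "L = (\<Sum>i=1..n-1. 1 / real i)"
  have "{0..n} = insert 0 {Suc 0..n}" by auto
  then have "(\<Sum>m=0..n. su_max n m) = (\<Sum>m=Suc 0..n. su_max n m)" by (simp add: su_max_def)
  also have "\<dots> = (\<Sum>p<n. su_max n (Suc p))" by (rule shift_sum)
  also have "\<dots> = (\<Sum>p<n. fact (n - 1) * (L ^ p / fact p))"
    by (rule sum.cong) (auto simp: su_max_def L_def)
  finally show ?thesis by (simp add: sum_distrib_left L_def)
qed

lemma sum_stirling_real: "(\<Sum>m=0..n. real (stirling n m)) = fact n"
proof -
  have "(\<Sum>m=0..n. stirling n m) = fact n" using sum_stirling[of n] by (simp add: atLeast0AtMost)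
  then have "real (\<Sum>m=0..n. stirling n m) = fact n" by simp
  then show ?thesis by (simp only: of_nat_sum)
qed

lemma part_iv:
  assumes n: "n \<ge> 2"
  shows "(\<Sum>m=0..n. su_max n m) / (\<Sum>m=0..n. real (stirling n m))
          \<le> (real n - 1) / real n * exp ((\<Sum>j=2..n. 1 / (real j - 1)) - ln (real n - 1))
        \<and> (real n - 1) / real n * exp ((\<Sum>j=2..n. 1 / (real j - 1)) - ln (real n - 1))
          \<le> exp euler_mascheroni"
proof -
  define L where "L = (\<Sum>i=1..n-1. 1 / real i)"
  have L0: "L \<ge> 0" unfolding L_def by (intro sum_nonneg) auto
  have LH: "L = harm (n - 1)" unfolding L_def harm_def by (simp add: inverse_eq_divide)
  have fn: "(fact n :: real) = real n * fact (n - 1)" using n fact_reduce[of n] by simp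
  have fpos: "(fact (n - 1) :: real) > 0" by simp
  have npos: "real n > 0" using n by simp
  have n1pos: "real n - 1 > 0" using n by simp
  have ratio: "(\<Sum>m=0..n. su_max n m) / (\<Sum>m=0..n. real (stirling n m)) \<le> exp L / real n"
  proof -
    have "(\<Sum>m=0..n. su_max n m) / (\<Sum>m=0..n. real (stirling n m))
        = fact (n - 1) * (\<Sum>p<n. L ^ p / fact p) / (real n * fact (n - 1))"
      using n by (simp add: sum_su_max sum_stirling_real fn L_def)
    also have "\<dots> = (\<Sum>p<n. L ^ p / fact p) / real n" using fpos by simp
    also have "\<dots> \<le> exp L / real n" using exp_partial[OF L0] npos by (intro divide_right_mono) auto
    finally show ?thesis .
  qed
  have S: "(\<Sum>j=2..n. 1 / (real j - 1)) = L"
  proof -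
    obtain n' where n': "n = Suc n'" using n by (cases n) auto
    have "(\<Sum>j=2..n. 1 / (real j - 1)) = (\<Sum>j=Suc 1..Suc n'. 1 / (real j - 1))" using n' by (simp only: numeral_2_eq_2 One_nat_def)
    also have "\<dots> = (\<Sum>i=1..n'. 1 / (real (Suc i) - 1))" by (rule sum.shift_bounds_cl_Suc_ivl)
    also have "\<dots> = L" unfolding L_def using n' by simp
    finally show ?thesis .
  qed
  have R: "(real n - 1) / real n * exp ((\<Sum>j=2..n. 1 / (real j - 1)) - ln (real n - 1)) = exp L / real n"
  proof -
    have "exp (L - ln (real n - 1)) = exp L / (real n - 1)" using n1pos by (simp add: exp_diff)
    then show ?thesis unfolding S using n1pos by simp
  qed
  have "exp L / real n \<le> exp euler_mascheroni"
  proof -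
    have lo: "euler_mascheroni \<ge> harm (Suc (n - 2)) - ln (real (n - 2 + 2)) + 1 / real (2 * (n - 2 + 2))"
      by (rule euler_mascheroni_lower)
    have "Suc (n - 2) = n - 1" "n - 2 + 2 = n" using n by auto
    then have h: "harm (n - 1) - ln (real n) + 1 / (2 * real n) \<le> (euler_mascheroni::real)" using lo by simp
    have "1 / (2 * real n) \<ge> (0::real)" by simp
    then have "L \<le> euler_mascheroni + ln (real n)" using h LH by linarith
    then have "exp L \<le> exp (euler_mascheroni + ln (real n))" by simp
    also have "\<dots> = exp euler_mascheroni * real n" using npos by (simp add: exp_add)
    finally show ?thesis using npos by (simp add: divide_le_eq)
  qed
  then show ?thesis using ratio unfolding R by simp
qed


theorem theorem5p3:
  fixes k n :: nat and c :: "nat \<Rightarrow> nat"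
  assumes "k \<ge> 1" and "n \<ge> 2" and "\<forall>\<beta>\<le>k. c \<beta> \<in> {0, 1}"
  defines "lam \<equiv> real (c 0) * (real n - 1) + real (c 1) * real k * (ln (real n - 1) + euler_mascheroni)
              + pi\<^sup>2 / 6 * (\<Sum>\<beta>=2..k. real (c \<beta>) * real (k choose \<beta>))"
    and "lam' \<equiv> real (compl_vec c 0) * (real n - 1) + real (compl_vec c 1) * real k * (ln (real n - 1) + euler_mascheroni)
              + pi\<^sup>2 / 6 * (\<Sum>\<beta>=2..k. real (compl_vec c \<beta>) * real (k choose \<beta>))"
  shows "(\<forall>m\<in>{0..n}. real (O_C c k n m) \<le> Omax (compl_vec c) k n (int n - int m))
    \<and> (\<Sum>m=0..n. Omax c k n (int m)) / (\<Sum>m=0..n. real (O_C c k n m)) \<le> exp lam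
    \<and> (\<Sum>m=0..n. Omax (compl_vec c) k n (int m)) / (\<Sum>m=0..n. real (O_C c k n m)) \<le> exp lam'
    \<and> (k = 1 \<and> c 0 = 0 \<and> c 1 = 1 \<longrightarrow>
        (\<Sum>m=0..n. su_max n m) / (\<Sum>m=0..n. real (stirling n m))
          \<le> (real n - 1) / real n * exp ((\<Sum>j=2..n. 1 / (real j - 1)) - ln (real n - 1))
        \<and> (real n - 1) / real n * exp ((\<Sum>j=2..n. 1 / (real j - 1)) - ln (real n - 1))
          \<le> exp euler_mascheroni
        \<and> exp (euler_mascheroni :: real) \<le> 1.7811)"
proof -
  have c1: "\<forall>b\<le>k. compl_vec c b \<in> {0, 1}" by (rule compl_01)
  have n1: "n \<ge> 1" using assms(2) by simp
  have P1: "\<forall>m\<in>{0..n}. real (O_C c k n m) \<le> Omax (compl_vec c) k n (int n - int m)"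
  proof
    fix m assume "m \<in> {0..n}"
    then have m: "m \<le> n" by simp
    have "O_C c k n m = O_C (compl_vec c) k n (n - m)" by (rule O_C_compl[OF assms(3) m])
    moreover have "real (O_C (compl_vec c) k n (n - m)) \<le> Omax (compl_vec c) k n (int (n - m))"
      by (rule O_C_le_Omax[OF c1 n1])
    moreover have "int (n - m) = int n - int m" using m by simp
    ultimately show "real (O_C c k n m) \<le> Omax (compl_vec c) k n (int n - int m)" by simp
  qed
  have P2: "(\<Sum>m=0..n. Omax c k n (int m)) / (\<Sum>m=0..n. real (O_C c k n m)) \<le> exp lam"
    unfolding lam_def by (rule ratio_main[OF assms(3) assms(1) assms(2)])
  have P3: "(\<Sum>m=0..n. Omax (compl_vec c) k n (int m)) / (\<Sum>m=0..n. real (O_C c k n m)) \<le> exp lam'"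
    unfolding lam'_def by (rule ratio_main[OF c1 assms(1) assms(2)])
  have P4: "k = 1 \<and> c 0 = 0 \<and> c 1 = 1 \<longrightarrow>
        (\<Sum>m=0..n. su_max n m) / (\<Sum>m=0..n. real (stirling n m))
          \<le> (real n - 1) / real n * exp ((\<Sum>j=2..n. 1 / (real j - 1)) - ln (real n - 1))
        \<and> (real n - 1) / real n * exp ((\<Sum>j=2..n. 1 / (real j - 1)) - ln (real n - 1))
          \<le> exp euler_mascheroni
        \<and> exp (euler_mascheroni :: real) \<le> 1.7811"
    using part_iv[OF assms(2)] exp_gamma_le by blast
  show ?thesis using P1 P2 P3 P4 by blast
qed

end
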